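(* Let $n\ge1$ be an integer. For every valid configuration $c\in\Omega'_n$, there exist two strictly increasing sequences $A,B:\mathbb Z\to\mathbb Z$ such that: (1) the set of positions of junction tiles in $c$ is the Cartesian product $c^{-1}(J'_n)=A(\mathbb Z)\times B(\mathbb Z)$; (2) $A(k+1)-A(k)\in\{n,n+1\}$ for every $k\in\mathbb Z$; (3) $B(k+1)-B(k)\in\{n,n+1\}$ for every $k\in\mathbb Z$.
   Context: $V_n=\{(v_0,v_1,v_2)\in\mathbb{Z}^3: 0\le v_0\le v_1\le 1,\ v_1\le v_2\le n+1\}$, elements written as words $v_0v_1v_2$. A Wang tile is $t=(a,b,c,d)$ with $\mathrm{RIGHT}(t)=a$, $\mathrm{TOP}(t)=b$, $\mathrm{LEFT}(t)=c$, $\mathrm{BOTTOM}(t)=d$; $\hat t=(b,a,d,c)$, $\hat S=\{\hat t:t\in S\}$. Define (as (right, top, left, bottom)): $W_n=\{(11(i+1),11(j+1),11i,11j):1\le i,j\le n\}$; $B'_n=\{(00(i+1),111,00i,11n):0\le i\le n\}$; $G_n=\{(01(i+1),111,00i,11(n+1)):0\le i\le n\}$; $Y_n=\{(01(i+1),112,01i,11(n+1)):1\le i\le n\}$; $A_n=\{(00(i+1),112,01i,11n):1\le i\le n\}$; $J'_n=\{((0,k,l),(0,r,s),(0,s,r+n),(0,l,k+n)):(k,l),(r,s)\in\{(0,0),(0,1),(1,1)\}\}$ (junction tiles). $\mathcal T'_n=W_n\cup B'_n\cup G_n\cup Y_n\cup A_n\cup\hat B'_n\cup\hat G_n\cup\hat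 Y_n\cup\hat A_n\cup J'_n$. $\Omega'_n$ is the set of configurations $c:\mathbb Z^2\to\mathcal T'_n$ with $\mathrm{RIGHT}(c(\mathbf m))=\mathrm{LEFT}(c(\mathbf m+\mathbf e_1))$ and $\mathrm{TOP}(c(\mathbf m))=\mathrm{BOTTOM}(c(\mathbf m+\mathbf e_2))$ for all $\mathbf m$. *)

theory Defs
  imports Main
begin

type_synonym label = "int \<times> int \<times> int"
type_synonym tile = "label \<times> label \<times> label \<times> label"

definition V :: "nat \<Rightarrow> label set" where
  "V n = {(v0, v1, v2). 0 \<le> v0 \<and> v0 \<le> v1 \<and> v1 \<le> 1 \<and> v1 \<le> v2 \<and> v2 \<le> int n + 1}"

definition RIGHT :: "tile \<Rightarrow> label" where "RIGHT t = fst t"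
definition TOP :: "tile \<Rightarrow> label" where "TOP t = fst (snd t)"
definition LEFT :: "tile \<Rightarrow> label" where "LEFT t = fst (snd (snd t))"
definition BOTTOM :: "tile \<Rightarrow> label" where "BOTTOM t = snd (snd (snd t))"

definition hat :: "tile \<Rightarrow> tile" where
  "hat t = (case t of (a, b, c, d) \<Rightarrow> (b, a, d, c))"

definition W :: "nat \<Rightarrow> tile set" where
  "W n = {((1,1,i+1), (1,1,j+1), (1,1,i), (1,1,j)) | i j. 1 \<le> i \<and> i \<le> int n \<and> 1 \<le> j \<and> j \<le> int n}"

definition B' :: "nat \<Rightarrow> tile set" where
  "B' n = {((0,0,i+1), (1,1,1), (0,0,i), (1,1,int n)) | i. 0 \<le> i \<and> i \<le> int n}"

definition G :: "nat \<Rightarrow> tile set" where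
  "G n = {((0,1,i+1), (1,1,1), (0,0,i), (1,1,int n + 1)) | i. 0 \<le> i \<and> i \<le> int n}"

definition Y :: "nat \<Rightarrow> tile set" where
  "Y n = {((0,1,i+1), (1,1,2), (0,1,i), (1,1,int n + 1)) | i. 1 \<le> i \<and> i \<le> int n}"

definition A :: "nat \<Rightarrow> tile set" where
  "A n = {((0,0,i+1), (1,1,2), (0,1,i), (1,1,int n)) | i. 1 \<le> i \<and> i \<le> int n}"

definition kl_pairs :: "(int \<times> int) set" where
  "kl_pairs = {(0,0), (0,1), (1,1)}"

definition J' :: "nat \<Rightarrow> tile set" where
  "J' n = {((0,k,l), (0,r,s), (0,s,r + int n), (0,l,k + int n)) | k l r s.
             (k, l) \<in> kl_pairs \<and> (r, s) \<in> kl_pairs}"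

definition T' :: "nat \<Rightarrow> tile set" where
  "T' n = W n \<union> B' n \<union> G n \<union> Y n \<union> A n
          \<union> hat ` B' n \<union> hat ` G n \<union> hat ` Y n \<union> hat ` A n \<union> J' n"

definition Omega' :: "nat \<Rightarrow> (int \<times> int \<Rightarrow> tile) set" where
  "Omega' n = {c. (\<forall>m. c m \<in> T' n) \<and>
     (\<forall>x y. RIGHT (c (x, y)) = LEFT (c (x + 1, y))) \<and>
     (\<forall>x y. TOP (c (x, y)) = BOTTOM (c (x, y + 1)))}"

end

theory Submission
  imports Defs
begin


definition th :: "label \<Rightarrow> int" where "th v = snd (snd v)"
definition sc :: "label \<Rightarrow> int" where "sc v = fst (snd v)"

lemmas sdefs = RIGHT_def LEFT_def TOP_def BOTTOM_def th_def sc_def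

lemma T'_cases[consumes 1]:
  assumes "t \<in> T' n"
  and "\<And>i j. t = ((1,1,i+1), (1,1,j+1), (1,1,i), (1,1,j)) \<Longrightarrow> 1 \<le> i \<Longrightarrow> i \<le> int n \<Longrightarrow> 1 \<le> j \<Longrightarrow> j \<le> int n \<Longrightarrow> P"
  and "\<And>i. t = ((0,0,i+1), (1,1,1), (0,0,i), (1,1,int n)) \<Longrightarrow> 0 \<le> i \<Longrightarrow> i \<le> int n \<Longrightarrow> P"
  and "\<And>i. t = ((0,1,i+1), (1,1,1), (0,0,i), (1,1,int n + 1)) \<Longrightarrow> 0 \<le> i \<Longrightarrow> i \<le> int n \<Longrightarrow> P"
  and "\<And>i. t = ((0,1,i+1), (1,1,2), (0,1,i), (1,1,int n + 1)) \<Longrightarrow> 1 \<le> i \<Longrightarrow> i \<le> int n \<Longrightarrow> P"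
  and "\<And>i. t = ((0,0,i+1), (1,1,2), (0,1,i), (1,1,int n)) \<Longrightarrow> 1 \<le> i \<Longrightarrow> i \<le> int n \<Longrightarrow> P"
  and "\<And>i. t = ((1,1,1), (0,0,i+1), (1,1,int n), (0,0,i)) \<Longrightarrow> 0 \<le> i \<Longrightarrow> i \<le> int n \<Longrightarrow> P"
  and "\<And>i. t = ((1,1,1), (0,1,i+1), (1,1,int n + 1), (0,0,i)) \<Longrightarrow> 0 \<le> i \<Longrightarrow> i \<le> int n \<Longrightarrow> P"
  and "\<And>i. t = ((1,1,2), (0,1,i+1), (1,1,int n + 1), (0,1,i)) \<Longrightarrow> 1 \<le> i \<Longrightarrow> i \<le> int n \<Longrightarrow> P"
  and "\<And>i. t = ((1,1,2), (0,0,i+1), (1,1,int n), (0,1,i)) \<Longrightarrow> 1 \<le> i \<Longrightarrow> i \<le> int n \<Longrightarrow> P"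
  and "\<And>k l r s. t = ((0,k,l), (0,r,s), (0,s,r + int n), (0,l,k + int n)) \<Longrightarrow>
          (k = 0 \<and> l = 0 \<or> k = 0 \<and> l = 1 \<or> k = 1 \<and> l = 1) \<Longrightarrow>
          (r = 0 \<and> s = 0 \<or> r = 0 \<and> s = 1 \<or> r = 1 \<and> s = 1) \<Longrightarrow> P"
  shows P
  using assms(1) unfolding T'_def
  apply (elim UnE imageE)
  apply (auto simp: W_def intro: assms(2))[1]
  apply (auto simp: B'_def intro: assms(3))[1]
  apply (auto simp: G_def intro: assms(4))[1]
  apply (auto simp: Y_def intro: assms(5))[1]
  apply (auto simp: A_def intro: assms(6))[1]
  apply (auto simp: B'_def hat_def intro: assms(7))[1]
  apply (auto simp: G_def hat_def intro: assms(8))[1]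
  apply (auto simp: Y_def hat_def intro: assms(9))[1]
  apply (auto simp: A_def hat_def intro: assms(10))[1]
  apply (auto simp: J'_def kl_pairs_def intro: assms(11))[1]
  done

lemma tf1: "t \<in> T' n \<Longrightarrow> fst (RIGHT t) = fst (LEFT t) \<and> fst (TOP t) = fst (BOTTOM t)
  \<and> (fst (RIGHT t) = 0 \<or> fst (RIGHT t) = 1) \<and> (fst (TOP t) = 0 \<or> fst (TOP t) = 1)"
  by (erule T'_cases) (auto simp: sdefs)

lemma tf_bounds: "t \<in> T' n \<Longrightarrow> 0 \<le> th (RIGHT t) \<and> th (RIGHT t) \<le> int n + 1
   \<and> 0 \<le> th (LEFT t) \<and> th (LEFT t) \<le> int n + 1"
  by (erule T'_cases) (auto simp: sdefs)

lemma tf_inc: "t \<in> T' n \<Longrightarrow> fst (TOP t) \<noteq> 0 \<Longrightarrow> th (RIGHT t) = th (LEFT t) + 1"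
  by (erule T'_cases) (auto simp: sdefs)

lemma tf_J: "t \<in> T' n \<Longrightarrow> fst (TOP t) = 0 \<Longrightarrow> fst (RIGHT t) = 0 \<Longrightarrow>
  th (RIGHT t) \<le> 1 \<and> int n \<le> th (LEFT t) \<and> th (BOTTOM t) = int n + sc (RIGHT t)
  \<and> th (TOP t) = sc (LEFT t) \<and> 0 \<le> sc (RIGHT t) \<and> sc (LEFT t) \<le> 1"
  by (erule T'_cases) (auto simp: sdefs)

lemma tf_hat: "t \<in> T' n \<Longrightarrow> fst (TOP t) = 0 \<Longrightarrow> fst (RIGHT t) \<noteq> 0 \<Longrightarrow> 1 \<le> th (RIGHT t)"
  by (erule T'_cases) (auto simp: sdefs)

lemma tf_B: "t \<in> T' n \<Longrightarrow> fst (TOP t) \<noteq> 0 \<Longrightarrow> fst (RIGHT t) = 0 \<Longrightarrow>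
  th (TOP t) = 1 + sc (LEFT t) \<and> th (BOTTOM t) = int n + sc (RIGHT t)"
  by (erule T'_cases) (auto simp: sdefs)

lemma tf_isJ: "t \<in> T' n \<Longrightarrow> t \<in> J' n \<longleftrightarrow> fst (RIGHT t) = 0 \<and> fst (TOP t) = 0"
  by (erule T'_cases) (auto simp: sdefs J'_def kl_pairs_def)

lemma hat_hat: "hat (hat t) = t" by (cases t) (simp add: hat_def)

lemma hat_T: "t \<in> T' n \<Longrightarrow> hat t \<in> T' n"
proof -
  assume a: "t \<in> T' n"
  have w: "hat t \<in> W n" if "t \<in> W n" using that by (auto simp: W_def hat_def)
  have j: "hat t \<in> J' n" if "t \<in> J' n" using that by (auto simp: J'_def hat_def)
  show ?thesis using a w j unfolding T'_def by (auto simp: hat_hat)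
qed

lemma hat_J: "hat t \<in> J' n \<longleftrightarrow> t \<in> J' n"
  by (cases t) (auto simp: J'_def hat_def)

lemma hat_sides: "RIGHT (hat t) = TOP t" "TOP (hat t) = RIGHT t" "LEFT (hat t) = BOTTOM t" "BOTTOM (hat t) = LEFT t"
  by (cases t, simp add: hat_def RIGHT_def TOP_def LEFT_def BOTTOM_def)+

lemma om: assumes "c \<in> Omega' n"
  shows "c m \<in> T' n" "RIGHT (c (x,y)) = LEFT (c (x+1,y))" "TOP (c (x,y)) = BOTTOM (c (x,y+1))"
  using assms unfolding Omega'_def by (cases m, auto)

lemma transp: assumes "c \<in> Omega' n" shows "(\<lambda>(x,y). hat (c (y,x))) \<in> Omega' n"
  using om[OF assms] by (auto simp: Omega'_def hat_sides hat_T)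

lemma int_const: assumes "\<forall>y::int. f (y+1) = f y" shows "f y = f 0"
proof (induct y rule: int_induct[where k=0])
  case base then show ?case by simp
next
  case (step1 i) then show ?case using assms by simp
next
  case (step2 i) then show ?case using assms[rule_format, of "i - 1"] by simp
qed

lemma col_const: assumes "c \<in> Omega' n" shows "fst (TOP (c (x,y))) = fst (TOP (c (x,0)))"
proof -
  have "\<forall>y. fst (TOP (c (x,y+1))) = fst (TOP (c (x,y)))"
    using om[OF assms] tf1 by metis
  then show ?thesis by (rule int_const)
qed

lemma row_const: assumes "c \<in> Omega' n" shows "fst (RIGHT (c (x,y))) = fst (RIGHT (c (0,y)))"
proof -
  have "\<forall>x. fst (RIGHT (c (x+1,y))) = fst (RIGHT (c (x,y)))"
    using om[OF assms] tf1 by metis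
  then show ?thesis using int_const[of "\<lambda>x. fst (RIGHT (c (x,y)))"] by blast
qed

lemma counter: assumes "c \<in> Omega' n"
  and "\<forall>z. a < z \<and> z < a + 1 + int m \<longrightarrow> fst (TOP (c (z,y))) \<noteq> 0"
  shows "th (LEFT (c (a+1+int m, y))) = th (RIGHT (c (a,y))) + int m"
  using assms(2)
proof (induct m)
  case 0 then show ?case using om(2)[OF assms(1), of a y] by simp
next
  case (Suc m)
  have h: "fst (TOP (c (a+1+int m,y))) \<noteq> 0" using Suc.prems by simp
  have e: "a + 1 + int (Suc m) = (a+1+int m) + 1" by simp
  have "th (LEFT (c (a+1+int (Suc m), y))) = th (RIGHT (c (a+1+int m,y)))"
    using om(2)[OF assms(1), of "a+1+int m" y] e by simp
  also have "\<dots> = th (LEFT (c (a+1+int m,y))) + 1" using tf_inc[OF om(1)[OF assms(1)] h] .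
  also have "\<dots> = th (RIGHT (c (a,y))) + int m + 1" using Suc by simp
  finally show ?case by simp
qed

lemma window: assumes "c \<in> Omega' n"
  shows "\<exists>z. a < z \<and> z < a + int n + 3 \<and> fst (TOP (c (z,y))) = 0"
proof (rule ccontr)
  assume "\<not> ?thesis"
  then have "\<forall>z. a < z \<and> z < a + 1 + int (n+2) \<longrightarrow> fst (TOP (c (z,y))) \<noteq> 0" by auto
  from counter[OF assms this] have "th (LEFT (c (a+1+int (n+2), y))) = th (RIGHT (c (a,y))) + int (n+2)" .
  moreover have "0 \<le> th (RIGHT (c (a,y)))" "th (LEFT (c (a+1+int (n+2), y))) \<le> int n + 1"
    using tf_bounds[OF om(1)[OF assms]] by auto
  ultimately show False by simp
qed



lemma strict_mono_int: fixes f :: "int \<Rightarrow> int" assumes "\<forall>k. f k < f (k+1)" shows "strict_mono f"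
proof -
  have a: "f x < f (x + 1 + int m)" for x m
  proof (induct m)
    case 0 then show ?case using assms by simp
  next
    case (Suc m) then show ?case using assms[rule_format, of "x + 1 + int m"] by (simp add: add.assoc)
  qed
  show ?thesis unfolding strict_mono_def
  proof (intro allI impI)
    fix x y :: int assume "x < y"
    then have "y = x + 1 + int (nat (y - x - 1))" by simp
    then show "f x < f y" using a by metis
  qed
qed

lemma enum:
  fixes S :: "int set" and D :: "int set"
  assumes ne: "x0 \<in> S"
    and up: "\<forall>a. \<exists>b\<in>S. a < b" and dn: "\<forall>a. \<exists>b\<in>S. b < a"
    and gap: "\<forall>a\<in>S. \<forall>b\<in>S. a < b \<longrightarrow> (\<forall>z. a < z \<and> z < b \<longrightarrow> z \<notin> S) \<longrightarrow> b - a \<in> D"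
  shows "\<exists>SA :: int \<Rightarrow> int. strict_mono SA \<and> range SA = S \<and> (\<forall>k. SA (k+1) - SA k \<in> D)"
proof -
  define nx where "nx a = a + 1 + int (LEAST k. a + 1 + int k \<in> S)" for a
  define pv where "pv a = a - 1 - int (LEAST k. a - 1 - int k \<in> S)" for a
  have nx: "nx a \<in> S \<and> a < nx a \<and> (\<forall>z. a < z \<and> z < nx a \<longrightarrow> z \<notin> S)" for a
  proof -
    obtain b where b: "b \<in> S" "a < b" using up by blast
    have ex: "a + 1 + int (nat (b - a - 1)) \<in> S" using b by simp
    have 1: "nx a \<in> S" unfolding nx_def by (rule LeastI[where P="\<lambda>k. a + 1 + int k \<in> S", OF ex])
    have 2: "z \<notin> S" if "a < z" "z < nx a" for z
    proof
      assume "z \<in> S"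
      hence "a + 1 + int (nat (z - a - 1)) \<in> S" using that by simp
      hence "(LEAST k. a + 1 + int k \<in> S) \<le> nat (z-a-1)" by (rule Least_le)
      thus False using that unfolding nx_def by linarith
    qed
    have 3: "a < nx a" unfolding nx_def by simp
    show ?thesis using 1 2 3 by blast
  qed
  have pv: "pv a \<in> S \<and> pv a < a \<and> (\<forall>z. pv a < z \<and> z < a \<longrightarrow> z \<notin> S)" for a
  proof -
    obtain b where b: "b \<in> S" "b < a" using dn by blast
    have ex: "a - 1 - int (nat (a - b - 1)) \<in> S" using b by simp
    have 1: "pv a \<in> S" unfolding pv_def by (rule LeastI[where P="\<lambda>k. a - 1 - int k \<in> S", OF ex])
    have 2: "z \<notin> S" if "pv a < z" "z < a" for z
    proof
      assume "z \<in> S"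
      hence "a - 1 - int (nat (a - z - 1)) \<in> S" using that by simp
      hence "(LEAST k. a - 1 - int k \<in> S) \<le> nat (a-z-1)" by (rule Least_le)
      thus False using that unfolding pv_def by linarith
    qed
    have 3: "pv a < a" unfolding pv_def by simp
    show ?thesis using 1 2 3 by blast
  qed
  define SA where "SA k = (if 0 \<le> k then (nx ^^ nat k) x0 else (pv ^^ nat (-k)) x0)" for k
  have fS: "(nx ^^ m) x0 \<in> S" for m by (induct m) (use ne nx in auto)
  have gS: "(pv ^^ m) x0 \<in> S" for m by (induct m) (use ne pv in auto)
  have inS: "SA k \<in> S" for k unfolding SA_def using fS gS by auto
  have sp: "SA (k+1) = nx (SA k)" if "0 \<le> k" for k
  proof -
    have "nat (k+1) = Suc (nat k)" using that by simp
    then show ?thesis unfolding SA_def using that by simp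
  qed
  have sn: "SA k = pv (SA (k+1))" if "k < 0" for k
  proof -
    have "nat (-k) = Suc (nat (-(k+1)))" using that by simp
    moreover have "SA (k+1) = (pv ^^ nat (-(k+1))) x0" unfolding SA_def using that by auto
    ultimately show ?thesis unfolding SA_def using that by simp
  qed
  have cons: "SA k \<in> S \<and> SA (k+1) \<in> S \<and> SA k < SA (k+1) \<and> (\<forall>z. SA k < z \<and> z < SA (k+1) \<longrightarrow> z \<notin> S)" for k
  proof (cases "0 \<le> k")
    case True then show ?thesis using sp[OF True] nx[of "SA k"] inS[of k] by simp
  next
    case False then have "k < 0" by simp
    then show ?thesis using sn[OF \<open>k < 0\<close>] pv[of "SA (k+1)"] inS[of "k+1"] by simp
  qed
  have sm: "strict_mono SA" by (rule strict_mono_int) (use cons in blast)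
  have gaps: "\<forall>k. SA (k+1) - SA k \<in> D"
  proof
    fix k
    have c: "SA k \<in> S" "SA (k+1) \<in> S" "SA k < SA (k+1)" "\<forall>z. SA k < z \<and> z < SA (k+1) \<longrightarrow> z \<notin> S"
      using cons[of k] by auto
    show "SA (k+1) - SA k \<in> D" using gap c(1,2) c(3) c(4) by blast
  qed
  have sup: "S \<subseteq> range SA"
  proof
    fix s assume s: "s \<in> S"
    show "s \<in> range SA"
    proof (cases "x0 \<le> s")
      case True
      have "\<forall>m. (nx ^^ m) x0 \<le> s \<longrightarrow> nat (s - (nx ^^ m) x0) \<le> N \<longrightarrow> (\<exists>m'. (nx ^^ m') x0 = s)" for N
      proof (induct N)
        case 0 then show ?case by auto
      next
        case (Suc N)
        show ?case
        proof (intro allI impI)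
          fix m assume a: "(nx ^^ m) x0 \<le> s" "nat (s - (nx ^^ m) x0) \<le> Suc N"
          show "\<exists>m'. (nx ^^ m') x0 = s"
          proof (cases "(nx ^^ m) x0 = s")
            case True then show ?thesis by blast
          next
            case False
            then have lt: "(nx ^^ m) x0 < s" using a by simp
            have "nx ((nx ^^ m) x0) \<le> s"
            proof (rule ccontr)
              assume "\<not> ?thesis" then have "s < nx ((nx ^^ m) x0)" by simp
              then show False using nx[of "(nx ^^ m) x0"] s lt by blast
            qed
            moreover have "(nx ^^ Suc m) x0 = nx ((nx ^^ m) x0)" by simp
            moreover have "(nx ^^ m) x0 < nx ((nx ^^ m) x0)" using nx by blast
            ultimately have "(nx ^^ Suc m) x0 \<le> s" "nat (s - (nx ^^ Suc m) x0) \<le> N" using a by arith+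
            then show ?thesis using Suc.hyps by blast
          qed
        qed
      qed
      from this[of "nat (s - x0)", rule_format, of 0] obtain m' where "(nx ^^ m') x0 = s" using True by auto
      then have "SA (int m') = s" unfolding SA_def by simp
      then show ?thesis by (metis rangeI)
    next
      case False
      have "\<forall>m. s \<le> (pv ^^ m) x0 \<longrightarrow> nat ((pv ^^ m) x0 - s) \<le> N \<longrightarrow> (\<exists>m'. (pv ^^ m') x0 = s)" for N
      proof (induct N)
        case 0 then show ?case by auto
      next
        case (Suc N)
        show ?case
        proof (intro allI impI)
          fix m assume a: "s \<le> (pv ^^ m) x0" "nat ((pv ^^ m) x0 - s) \<le> Suc N"
          show "\<exists>m'. (pv ^^ m') x0 = s"
          proof (cases "(pv ^^ m) x0 = s")
            case True then show ?thesis by blast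
          next
            case False
            then have lt: "s < (pv ^^ m) x0" using a by simp
            have "s \<le> pv ((pv ^^ m) x0)"
            proof (rule ccontr)
              assume "\<not> ?thesis" then have "pv ((pv ^^ m) x0) < s" by simp
              then show False using pv[of "(pv ^^ m) x0"] s lt by blast
            qed
            moreover have "(pv ^^ Suc m) x0 = pv ((pv ^^ m) x0)" by simp
            moreover have "pv ((pv ^^ m) x0) < (pv ^^ m) x0" using pv by blast
            ultimately have "s \<le> (pv ^^ Suc m) x0" "nat ((pv ^^ Suc m) x0 - s) \<le> N" using a by arith+
            then show ?thesis using Suc.hyps by blast
          qed
        qed
      qed
      from this[of "nat (x0 - s)", rule_format, of 0] obtain m' where m': "(pv ^^ m') x0 = s" using False by auto
      have "SA (- int m') = s"
      proof (cases m')
        case 0 then show ?thesis using m' unfolding SA_def by simp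
      next
        case (Suc k)
        then have "nat (- (- int m')) = Suc k" by simp
        then show ?thesis using m' Suc unfolding SA_def by simp
      qed
      then show ?thesis by (metis rangeI)
    qed
  qed
  have "range SA = S" using sup inS by blast
  then show ?thesis using sm gaps by (intro exI[of _ SA]) simp
qed



lemma cols:
  assumes n1: "n \<ge> 1" and c: "c \<in> Omega' n"
  shows "\<exists>SA :: int \<Rightarrow> int. strict_mono SA \<and> range SA = {x. \<exists>y. c (x,y) \<in> J' n}
           \<and> (\<forall>k. SA (k+1) - SA k \<in> {int n, int n + 1})"
proof -
  have T: "c m \<in> T' n" for m using om(1)[OF c] .
  have cc: "fst (TOP (c (x,y))) = fst (TOP (c (x,0)))" for x y using col_const[OF c] .
  have rc: "fst (RIGHT (c (x,y))) = fst (RIGHT (c (0,y)))" for x y using row_const[OF c] .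
  have vm: "TOP (c (x,y)) = BOTTOM (c (x,y+1))" for x y using om(3)[OF c] .
  have hm: "RIGHT (c (x,y)) = LEFT (c (x+1,y))" for x y using om(2)[OF c] .
  have n1i: "(1::int) \<le> int n" using n1 by simp
  define c' where "c' = (\<lambda>(x,y). hat (c (y,x)))"
  have c': "c' \<in> Omega' n" unfolding c'_def by (rule transp[OF c])
  obtain y0 where y0: "fst (RIGHT (c (0,y0))) = 0"
  proof -
    obtain z where "fst (TOP (c' (z,0))) = 0" using window[OF c', of 0 0] by auto
    then have "fst (RIGHT (c (0,z))) = 0" unfolding c'_def by (simp add: hat_sides)
    then show ?thesis using that by blast
  qed
  define S where "S = {x. fst (TOP (c (x,0))) = 0}"
  have S: "{x. \<exists>y. c (x,y) \<in> J' n} = S"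
  proof
    show "{x. \<exists>y. c (x,y) \<in> J' n} \<subseteq> S"
    proof
      fix x assume "x \<in> {x. \<exists>y. c (x,y) \<in> J' n}"
      then obtain y where "c (x,y) \<in> J' n" by blast
      then have "fst (TOP (c (x,y))) = 0" using tf_isJ[OF T] by blast
      then show "x \<in> S" unfolding S_def using cc[of x y] by simp
    qed
  next
    show "S \<subseteq> {x. \<exists>y. c (x,y) \<in> J' n}"
    proof
      fix x assume "x \<in> S"
      then have "fst (TOP (c (x,y0))) = 0" "fst (RIGHT (c (x,y0))) = 0" unfolding S_def using cc[of x y0] rc[of x y0] y0 by simp_all
      then have "c (x,y0) \<in> J' n" using tf_isJ[OF T] by blast
      then show "x \<in> {x. \<exists>y. c (x,y) \<in> J' n}" by blast
    qed
  qed
  have wind: "\<exists>z. a < z \<and> z < a + int n + 3 \<and> z \<in> S" for a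
    using window[OF c, of a 0] unfolding S_def by auto
  obtain x0 where x0: "x0 \<in> S" using wind by blast
  have up: "\<forall>a. \<exists>b\<in>S. a < b"
  proof
    fix a obtain z where "a < z" "z \<in> S" using wind by blast
    then show "\<exists>b\<in>S. a < b" by blast
  qed
  have dn: "\<forall>a. \<exists>b\<in>S. b < a"
  proof
    fix a obtain z where "a - int n - 3 < z" "z < a - int n - 3 + int n + 3" "z \<in> S" using wind by blast
    then show "\<exists>b\<in>S. b < a" by auto
  qed
  have gap: "\<forall>a\<in>S. \<forall>b\<in>S. a < b \<longrightarrow> (\<forall>z. a < z \<and> z < b \<longrightarrow> z \<notin> S) \<longrightarrow> b - a \<in> {int n, int n + 1}"
  proof (intro ballI impI)
    fix a b assume a: "a \<in> S" and b: "b \<in> S" and ab: "a < b" and btw: "\<forall>z. a < z \<and> z < b \<longrightarrow> z \<notin> S"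
    have ca: "fst (TOP (c (a,y))) = 0" for y using a cc[of a y] unfolding S_def by simp
    have cb: "fst (TOP (c (b,y))) = 0" for y using b cc[of b y] unfolding S_def by simp
    have nc: "fst (TOP (c (z,y))) \<noteq> 0" if "a < z" "z < b" for z y
      using btw that cc[of z y] unfolding S_def by simp
    have bb: "a + 1 + int (nat (b-a-1)) = b" using ab by simp
    have btw': "\<forall>z. a < z \<and> z < a + 1 + int (nat (b - a - 1)) \<longrightarrow> fst (TOP (c (z,y))) \<noteq> 0" for y
      using nc bb by simp
    have cnt: "th (LEFT (c (b,y))) = th (RIGHT (c (a,y))) + (b - a - 1)" for y
      using counter[OF c btw'[of y]] bb ab by simp
    have lower: "int n \<le> b - a"
    proof -
      have r0: "fst (RIGHT (c (x,y0))) = 0" for x using rc[of x y0] y0 by simp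
      have "th (RIGHT (c (a,y0))) \<le> 1" using tf_J[OF T ca r0] by simp
      moreover have "int n \<le> th (LEFT (c (b,y0)))" using tf_J[OF T cb r0] by simp
      ultimately show ?thesis using cnt[of y0] by simp
    qed
    have upper: "b - a \<le> int n + 1"
    proof (cases "\<exists>y1. fst (RIGHT (c (0,y1))) \<noteq> 0")
      case True
      then obtain y1 where y1: "fst (RIGHT (c (0,y1))) \<noteq> 0" by blast
      have r1: "fst (RIGHT (c (x,y1))) \<noteq> 0" for x using rc[of x y1] y1 by simp
      have "1 \<le> th (RIGHT (c (a,y1)))" using tf_hat[OF T ca r1] .
      moreover have "th (LEFT (c (b,y1))) \<le> int n + 1" using tf_bounds[OF T] by blast
      ultimately show ?thesis using cnt[of y1] by simp
    next
      case False
      then have r0: "fst (RIGHT (c (x,y))) = 0" for x y using rc[of x y] by simp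
      have ka: "int n = 1 \<and> sc (RIGHT (c (a,y))) = 0" for y
      proof -
        have "th (TOP (c (a,y-1))) = th (BOTTOM (c (a,y)))" using vm[of a "y-1"] by simp
        then show ?thesis using tf_J[OF T ca r0, of y] tf_J[OF T ca r0, of "y-1"] n1i by linarith
      qed
      have sb: "sc (LEFT (c (b,y))) = 1" for y
      proof -
        have "th (TOP (c (b,y))) = th (BOTTOM (c (b,y+1)))" using vm[of b y] by simp
        then show ?thesis using tf_J[OF T cb r0, of y] tf_J[OF T cb r0, of "y+1"] n1i by linarith
      qed
      have step: "sc (RIGHT (c (a + int m, y))) = 0" if "a + int m < b" for m y
        using that
      proof (induct m arbitrary: y)
        case 0 then show ?case using ka by simp
      next
        case (Suc m)
        define x where "x = a + int m + 1"
        have e: "a + int (Suc m) = x" unfolding x_def by simp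
        have ncx: "fst (TOP (c (x,y'))) \<noteq> 0" for y' using nc[of x y'] Suc.prems e unfolding x_def by simp
        have ih: "sc (RIGHT (c (a + int m, y - 1))) = 0" using Suc.hyps Suc.prems by simp
        have "LEFT (c (x, y-1)) = RIGHT (c (a + int m, y-1))" using hm[of "a + int m" "y-1"] unfolding x_def by simp
        then have l0: "sc (LEFT (c (x,y-1))) = 0" using ih by simp
        have "th (TOP (c (x,y-1))) = th (BOTTOM (c (x,y)))" using vm[of x "y-1"] by simp
        then have "sc (RIGHT (c (x,y))) = 0"
          using tf_B[OF T ncx[of "y-1"] r0] tf_B[OF T ncx[of y] r0] l0 ka[of 0] by linarith
        then show ?case using e by simp
      qed
      have "a + int (nat (b-a-1)) = b - 1" using ab by simp
      then have "sc (RIGHT (c (b-1, 0))) = 0" using step[of "nat (b-a-1)" 0] ab by simp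
      moreover have "RIGHT (c (b-1,0)) = LEFT (c (b,0))" using hm[of "b-1" 0] by simp
      ultimately show ?thesis using sb[of 0] by simp
    qed
    show "b - a \<in> {int n, int n + 1}" using lower upper by auto
  qed
  from enum[OF x0 up dn gap] show ?thesis unfolding S .
qed

theorem lemma6p3:
  fixes n :: nat and c :: "int \<times> int \<Rightarrow> tile"
  assumes "n \<ge> 1" and "c \<in> Omega' n"
  shows "\<exists>(SA :: int \<Rightarrow> int) (SB :: int \<Rightarrow> int). strict_mono SA \<and> strict_mono SB \<and>
           c -` J' n = range SA \<times> range SB \<and>
           (\<forall>k. SA (k + 1) - SA k \<in> {int n, int n + 1}) \<and>
           (\<forall>k. SB (k + 1) - SB k \<in> {int n, int n + 1})"
proof -
  obtain SA :: "int \<Rightarrow> int" where A: "strict_mono SA" "range SA = {x. \<exists>y. c (x,y) \<in> J' n}"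
      "\<forall>k. SA (k+1) - SA k \<in> {int n, int n + 1}"
    using cols[OF assms] by blast
  define c' where "c' = (\<lambda>(x,y). hat (c (y,x)))"
  have c': "c' \<in> Omega' n" unfolding c'_def by (rule transp[OF assms(2)])
  obtain SB :: "int \<Rightarrow> int" where B: "strict_mono SB" "range SB = {x. \<exists>y. c' (x,y) \<in> J' n}"
      "\<forall>k. SB (k+1) - SB k \<in> {int n, int n + 1}"
    using cols[OF assms(1) c'] by blast
  have rB: "range SB = {y. \<exists>x. c (x,y) \<in> J' n}" using B(2) unfolding c'_def by (simp add: hat_J)
  have T: "c m \<in> T' n" for m using om(1)[OF assms(2)] .
  have prod: "c -` J' n = {x. \<exists>y. c (x,y) \<in> J' n} \<times> {y. \<exists>x. c (x,y) \<in> J' n}"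
  proof
    show "c -` J' n \<subseteq> {x. \<exists>y. c (x,y) \<in> J' n} \<times> {y. \<exists>x. c (x,y) \<in> J' n}"
    proof
      fix p assume "p \<in> c -` J' n"
      then show "p \<in> {x. \<exists>y. c (x,y) \<in> J' n} \<times> {y. \<exists>x. c (x,y) \<in> J' n}"
        by (cases p) (simp, blast)
    qed
  next
    show "{x. \<exists>y. c (x,y) \<in> J' n} \<times> {y. \<exists>x. c (x,y) \<in> J' n} \<subseteq> c -` J' n"
    proof
      fix p assume "p \<in> {x. \<exists>y. c (x,y) \<in> J' n} \<times> {y. \<exists>x. c (x,y) \<in> J' n}"
      then obtain x y y1 x2 where p: "p = (x,y)" and j1: "c (x,y1) \<in> J' n" and j2: "c (x2,y) \<in> J' n" by blast
      have "fst (TOP (c (x,y1))) = 0" "fst (RIGHT (c (x2,y))) = 0" using j1 j2 tf_isJ[OF T] by auto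
      then have "fst (TOP (c (x,y))) = 0" "fst (RIGHT (c (x,y))) = 0"
        using col_const[OF assms(2), of x y] col_const[OF assms(2), of x y1]
          row_const[OF assms(2), of x y] row_const[OF assms(2), of x2 y] by simp_all
      then have "c (x,y) \<in> J' n" using tf_isJ[OF T] by blast
      then show "p \<in> c -` J' n" using p by simp
    qed
  qed
  show ?thesis using A B rB prod by (intro exI[of _ SA] exI[of _ SB]) simp
qed

end
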